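(* If the extremal function $F_n$ is not constant, then its degree satisfies $\deg F_n\ge\lceil\frac{n+1}{2}\rceil$.
   Context: Let $\mathsf E\subset\overline{\mathbb R}$ be compact, proper, with infinitely many points. Divisors are finitely supported $D:\overline{\mathbb C}\to\mathbb Z$; for rational $f$, $(f)_\infty$ is the polar divisor ($0$ for constants) and $\deg f=\deg(f)_\infty$; $\mathcal L(D)=\{f\text{ rational}:(f)_\infty\le D\}$. For $\mathbf c\in\overline{\mathbb R}$, $r(z,\mathbf c)=1/(\mathbf c-z)$ if $\mathbf c\neq\infty$, $r(z,\infty)=z$. Fix $n\ge1$, an integral divisor $D_n^\infty$ of degree $n$ supported in $\overline{\mathbb R}\setminus\mathsf E$, and $x_*\in\overline{\mathbb R}\setminus\mathsf E$, $d_n=D_n^\infty(x_* )$. $F_n$ is the unique maximizer of $\Re\lim_{x\to x_*}F(x)/r(x,x_* )^{d_n}$ over $F\in\mathcal L(D_n^\infty)$ with $\sup_{\mathsf E}|F|\le1$. *)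

theory Defs
  imports "HOL-Analysis.Analysis" "HOL-Computational_Algebra.Polynomial"
begin

text \<open>Points of the Riemann sphere: \<open>Some z\<close> for \<open>z \<in> \<complex>\<close>, \<open>None\<close> for \<open>\<infinity>\<close>.\<close>
type_synonym csphere = "complex option"

definition ext_reals :: "csphere set" where
  "ext_reals = insert None (Some ` \<real>)"

text \<open>Cayley transform: a homeomorphism from the extended real line (with its
  one-point-compactification topology) onto the unit circle; used to express
  compactness of subsets of the extended real line.\<close>
definition cayley :: "csphere \<Rightarrow> complex" where
  "cayley x = (case x of None \<Rightarrow> 1 | Some z \<Rightarrow> (z - \<i>) / (z + \<i>))"

definition compact_ext :: "csphere set \<Rightarrow> bool" where
  "compact_ext E \<longleftrightarrow> compact (cayley ` E)"

text \<open>A rational function is represented by a reduced fraction \<open>p / q\<close>.\<close>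
definition ratfun :: "complex poly \<Rightarrow> complex poly \<Rightarrow> bool" where
  "ratfun p q \<longleftrightarrow> q \<noteq> 0 \<and> coprime p q"

text \<open>Polar divisor of \<open>p/q\<close> (for reduced \<open>p/q\<close>): pole order at each point of the sphere.\<close>
definition polar :: "complex poly \<Rightarrow> complex poly \<Rightarrow> csphere \<Rightarrow> nat" where
  "polar p q x = (case x of Some c \<Rightarrow> order c q | None \<Rightarrow> degree p - degree q)"

definition rdeg :: "complex poly \<Rightarrow> complex poly \<Rightarrow> nat" where
  "rdeg p q = (\<Sum>x\<in>{x. polar p q x \<noteq> 0}. polar p q x)"

definition LL :: "(csphere \<Rightarrow> int) \<Rightarrow> (complex poly \<times> complex poly) set" where
  "LL D = {(p, q). ratfun p q \<and> (\<forall>x. int (polar p q x) \<le> D x)}"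

definition rval :: "complex poly \<Rightarrow> complex poly \<Rightarrow> csphere \<Rightarrow> complex" where
  "rval p q x = (case x of Some z \<Rightarrow> poly p z / poly q z
     | None \<Rightarrow> Lim at_infinity (\<lambda>z. poly p z / poly q z))"

definition lead_val :: "complex poly \<Rightarrow> complex poly \<Rightarrow> csphere \<Rightarrow> nat \<Rightarrow> complex" where
  "lead_val p q xs d = (case xs of
       Some c \<Rightarrow> Lim (at c) (\<lambda>z. (poly p z / poly q z) / (1 / (c - z)) ^ d)
     | None \<Rightarrow> Lim at_infinity (\<lambda>z. (poly p z / poly q z) / z ^ d))"

definition admissible :: "csphere set \<Rightarrow> (csphere \<Rightarrow> int) \<Rightarrow> complex poly \<Rightarrow> complex poly \<Rightarrow> bool" where
  "admissible E D p q \<longleftrightarrow> (p, q) \<in> LL D \<and> (\<forall>x\<in>E. cmod (rval p q x) \<le> 1)"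

definition is_constant_rf :: "complex poly \<Rightarrow> complex poly \<Rightarrow> bool" where
  "is_constant_rf p q \<longleftrightarrow> (\<exists>c. \<forall>z. poly q z \<noteq> 0 \<longrightarrow> poly p z / poly q z = c)"

end

theory Submission imports Defs "HOL-Computational_Algebra.Fundamental_Theorem_Algebra" "HOL-Computational_Algebra.Polynomial_Factorial" "HOL-Computational_Algebra.Field_as_Ring" begin

definition hat :: "nat \<Rightarrow> complex poly \<Rightarrow> complex \<Rightarrow> complex" where
  "hat N P w = (\<Sum>k\<le>N. coeff P k * (1 - w) ^ (N - k) * (\<i> * (1 + w)) ^ k)"

lemma poly_sum_N:
  fixes P :: "complex poly"
  assumes "degree P \<le> N"
  shows "poly P z = (\<Sum>k\<le>N. coeff P k * z ^ k)"
proof -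
  have "poly P z = (\<Sum>k\<le>degree P. coeff P k * z ^ k)" by (rule poly_altdef)
  also have "\<dots> = (\<Sum>k\<le>N. coeff P k * z ^ k)"
    using assms by (intro sum.mono_neutral_left) (auto simp: coeff_eq_0)
  finally show ?thesis .
qed

lemma hat_eq:
  assumes "degree P \<le> N" "z \<noteq> - \<i>"
  shows "hat N P ((z - \<i>) / (z + \<i>)) = (1 - (z - \<i>) / (z + \<i>)) ^ N * poly P z"
proof -
  define a where "a = 1 - (z - \<i>) / (z + \<i>)"
  have zi: "z + \<i> \<noteq> 0" using assms(2) by (metis add.commute add_eq_0_iff2 minus_equation_iff)
  have a: "a = 2 * \<i> / (z + \<i>)" using zi unfolding a_def by (simp add: field_simps)
  have b: "\<i> * (1 + (z - \<i>) / (z + \<i>)) = a * z" using zi unfolding a by (simp add: field_simps)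
  have "hat N P ((z - \<i>) / (z + \<i>)) = (\<Sum>k\<le>N. coeff P k * a ^ (N - k) * (a * z) ^ k)"
    unfolding hat_def b a_def[symmetric] by simp
  also have "\<dots> = (\<Sum>k\<le>N. a ^ N * (coeff P k * z ^ k))"
    by (intro sum.cong refl) (simp add: power_mult_distrib power_add[symmetric])
  also have "\<dots> = a ^ N * poly P z"
    by (simp add: sum_distrib_left poly_sum_N[OF assms(1)])
  finally show ?thesis unfolding a_def .
qed

lemma hat_one: "hat N P 1 = coeff P N * (2 * \<i>) ^ N"
proof -
  have "hat N P 1 = (\<Sum>k\<le>N. if k = N then coeff P N * (2 * \<i>) ^ N else 0)"
    unfolding hat_def by (intro sum.cong refl) (auto simp: mult_ac)
  also have "\<dots> = coeff P N * (2 * \<i>) ^ N" by simp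
  finally show ?thesis .
qed

lemma continuous_hat: "continuous_on S (hat N P)"
  unfolding hat_def by (intro continuous_intros)

lemma hat_lin: "hat N (smult a P + smult b R) w = a * hat N P w + b * hat N R w"
  unfolding hat_def by (simp add: algebra_simps sum.distrib sum_distrib_left)

lemma hat_ratio:
  assumes "degree P \<le> N" "degree R \<le> N" "z \<noteq> - \<i>"
  shows "hat N P ((z - \<i>) / (z + \<i>)) / hat N R ((z - \<i>) / (z + \<i>)) = poly P z / poly R z"
proof -
  have zi: "z + \<i> \<noteq> 0" using assms(3) by (metis add.commute add_eq_0_iff2 minus_equation_iff)
  have "1 - (z - \<i>) / (z + \<i>) \<noteq> 0" using zi by (simp add: field_simps)
  then show ?thesis using hat_eq[OF assms(1,3)] hat_eq[OF assms(2,3)] by simp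
qed

lemma cayley_tendsto: "((\<lambda>z. (z - \<i>) / (z + \<i>)) \<longlongrightarrow> 1) at_infinity"
proof -
  have "((\<lambda>z. 2 * \<i> / (z + \<i>)) \<longlongrightarrow> 0) at_infinity"
    by (intro tendsto_divide_0[OF tendsto_const] tendsto_add_filterlim_at_infinity'[OF filterlim_ident tendsto_const])
  then have "((\<lambda>z. 1 - 2 * \<i> / (z + \<i>)) \<longlongrightarrow> 1 - 0) at_infinity"
    by (intro tendsto_diff tendsto_const)
  moreover have "eventually (\<lambda>z. 1 - 2 * \<i> / (z + \<i>) = (z - \<i>) / (z + \<i>)) at_infinity"
    unfolding eventually_at_infinity
  proof (rule exI[of _ 2], intro allI impI)
    fix x :: complex assume "2 \<le> norm x"
    then have "x + \<i> \<noteq> 0"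
    proof (intro notI)
      assume "x + \<i> = 0" then have "x = - \<i>" by (metis add.commute add_eq_0_iff2 minus_equation_iff)
      with \<open>2 \<le> norm x\<close> show False by simp
    qed
    then show "1 - 2 * \<i> / (x + \<i>) = (x - \<i>) / (x + \<i>)" by (simp add: field_simps)
  qed
  ultimately show ?thesis by (simp add: tendsto_cong)
qed

lemma eventually_poly_nz_inf:
  fixes Q :: "complex poly" assumes "Q \<noteq> 0"
  shows "eventually (\<lambda>z. poly Q z \<noteq> 0) at_infinity"
proof -
  have "finite {z. poly Q z = 0}" using poly_roots_finite[OF assms] .
  then have "bounded {z. poly Q z = 0}" by (rule finite_imp_bounded)
  then obtain B where B: "\<And>z. poly Q z = 0 \<Longrightarrow> norm z \<le> B" unfolding bounded_iff by auto
  show ?thesis unfolding eventually_at_infinity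
    by (rule exI[of _ "B + 1"]) (use B in force)
qed

lemma eventually_poly_nz_at:
  fixes Q :: "complex poly" assumes "Q \<noteq> 0"
  shows "eventually (\<lambda>z. poly Q z \<noteq> 0 \<and> z \<noteq> c) (at c)"
proof -
  define S where "S = {z. poly Q z = 0} - {c}"
  have "finite S" unfolding S_def using poly_roots_finite[OF assms] by auto
  then have "closed S" by (rule finite_imp_closed)
  then have "open (- S)" by auto
  moreover have "c \<in> - S" unfolding S_def by auto
  ultimately show ?thesis unfolding eventually_at_topological
    by (intro exI[of _ "- S"]) (auto simp: S_def)
qed

lemma lim_inf_ratio:
  fixes P R :: "complex poly"
  assumes "degree P \<le> N" "degree R \<le> N" "coeff R N \<noteq> 0"
  shows "((\<lambda>z. poly P z / poly R z) \<longlongrightarrow> coeff P N / coeff R N) at_infinity"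
proof -
  have c: "continuous_on UNIV (\<lambda>w. hat N P w / hat N R w) \<longrightarrow> True" by simp
  have "((\<lambda>w. hat N P w / hat N R w) \<longlongrightarrow> hat N P 1 / hat N R 1) (at 1)"
  proof (rule tendsto_divide)
    show "(hat N P \<longlongrightarrow> hat N P 1) (at 1)" "(hat N R \<longlongrightarrow> hat N R 1) (at 1)"
      using continuous_hat[of UNIV] by (auto simp: continuous_on_def)
    show "hat N R 1 \<noteq> 0" using assms(3) by (simp add: hat_one)
  qed
  moreover have "filterlim (\<lambda>z. (z - \<i>) / (z + \<i>)) (at 1) at_infinity"
  proof -
    have ev: "\<forall>\<^sub>F x in at_infinity. (x - \<i>) / (x + \<i>) \<noteq> 1"
      unfolding eventually_at_infinity
    proof (rule exI[of _ 2], intro allI impI)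
      fix x :: complex assume "2 \<le> norm x"
      then have "x + \<i> \<noteq> 0"
      proof (intro notI)
        assume "x + \<i> = 0" then have "x = - \<i>" by (metis add.commute add_eq_0_iff2 minus_equation_iff)
        with \<open>2 \<le> norm x\<close> show False by simp
      qed
      then show "(x - \<i>) / (x + \<i>) \<noteq> 1" by (simp add: field_simps)
    qed
    show ?thesis unfolding filterlim_at using cayley_tendsto ev by simp
  qed
  ultimately have "((\<lambda>z. hat N P ((z - \<i>) / (z + \<i>)) / hat N R ((z - \<i>) / (z + \<i>)))
       \<longlongrightarrow> hat N P 1 / hat N R 1) at_infinity"
    by (rule filterlim_compose)
  moreover have "eventually (\<lambda>z. hat N P ((z - \<i>) / (z + \<i>)) / hat N R ((z - \<i>) / (z + \<i>))
      = poly P z / poly R z) at_infinity"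
    unfolding eventually_at_infinity
  proof (rule exI[of _ 2], intro allI impI)
    fix x :: complex assume "2 \<le> norm x"
    then have "x \<noteq> - \<i>" by auto
    then show "hat N P ((x - \<i>) / (x + \<i>)) / hat N R ((x - \<i>) / (x + \<i>)) = poly P x / poly R x"
      using hat_ratio[OF assms(1,2)] by blast
  qed
  ultimately show ?thesis using assms(3) by (simp add: tendsto_cong hat_one)
qed

lemma prod_lin_nz: "(\<Prod>x\<in>S. [:-x,1::complex:] ^ f x) \<noteq> 0"
  by (cases "finite S") (auto simp: prod_zero_iff)

lemma order_prod_lin:
  fixes c :: complex
  assumes "finite S"
  shows "order c (\<Prod>x\<in>S. [:-x,1:] ^ f x) = (if c \<in> S then f c else 0)"
  using assms
proof (induction S rule: finite_induct)
  case empty then show ?case by simp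
next
  case (insert a S)
  have nz: "[:-a,1:] ^ f a * (\<Prod>x\<in>S. [:-x,1::complex:] ^ f x) \<noteq> 0"
    using prod_lin_nz[where S=S and f=f] by simp
  have "order c (\<Prod>x\<in>insert a S. [:-x,1:] ^ f x)
      = order c ([:-a,1:] ^ f a) + order c (\<Prod>x\<in>S. [:-x,1::complex:] ^ f x)"
    using insert nz by (simp add: order_mult)
  moreover have "order c ([:-a,1:] ^ f a) = (if c = a then f a else 0)"
    by (cases "c = a") (auto simp: order_power_n_n intro!: order_0I)
  ultimately show ?case using insert by auto
qed

lemma degree_prod_lin:
  "degree (\<Prod>x\<in>S. [:-x,1::complex:] ^ f x) = (\<Sum>x\<in>S. f x)"
proof (cases "finite S")
  case True
  then show ?thesis
    by (subst degree_prod_sum_eq) (auto simp: degree_linear_power)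
qed simp

lemma poly_prod_lin_zero:
  assumes "finite S"
  shows "poly (\<Prod>x\<in>S. [:-x,1::complex:] ^ f x) z = 0 \<longleftrightarrow> z \<in> S \<and> f z > 0"
  using assms by (auto simp: poly_prod prod_zero_iff)

lemma dvd_by_order:
  fixes q :: "complex poly"
  assumes "q \<noteq> 0" "Q \<noteq> 0" "\<And>c. order c q \<le> order c Q"
  shows "q dvd Q"
  using assms
proof (induction q arbitrary: Q rule: poly_root_order_induct)
  case 0 then show ?case by simp
next
  case (no_roots p)
  then have "degree p = 0"
    using fundamental_theorem_of_algebra constant_degree by metis
  then obtain a where "p = [:a:]" by (metis degree_eq_zeroE)
  with no_roots.prems have "is_unit p" by (simp add: is_unit_poly_iff dvd_field_iff)
  then show ?case by (rule unit_imp_dvd)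
next
  case (root p x k)
  have pnz: "p \<noteq> 0" using root.prems by auto
  have "order x ([:-x,1:] ^ k * p) = k"
    using root pnz by (subst order_mult) (auto simp: order_power_n_n order_0I)
  then have "k \<le> order x Q" using root.prems(3)[of x] by simp
  then have "[:-x,1:] ^ k dvd Q" using order_divides by blast
  then obtain Q' where Q': "Q = [:-x,1:] ^ k * Q'" by (elim dvdE)
  have Q'nz: "Q' \<noteq> 0" using Q' root.prems by auto
  have "p dvd Q'"
  proof (rule root.IH[OF pnz Q'nz])
    fix c
    have "order c ([:-x,1:] ^ k * p) \<le> order c Q" by (rule root.prems(3))
    then have "order c ([:-x,1:] ^ k) + order c p \<le> order c ([:-x,1:] ^ k) + order c Q'"
      using pnz Q'nz Q' by (simp add: order_mult)
    then show "order c p \<le> order c Q'" by simp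
  qed
  then show ?case using Q' by auto
qed

lemma degree_sum_order:
  fixes q :: "complex poly"
  assumes "q \<noteq> 0"
  shows "degree q = (\<Sum>c | poly q c = 0. order c q)"
proof -
  have "degree q = degree (smult (lead_coeff q) (\<Prod>z|poly q z = 0. [:-z, 1:] ^ order z q))"
    by (simp add: complex_poly_decompose)
  also have "\<dots> = (\<Sum>c | poly q c = 0. order c q)"
    using assms by (simp add: degree_prod_lin)
  finally show ?thesis .
qed

lemma real_not_minus_i: "z \<in> \<real> \<Longrightarrow> z \<noteq> - \<i>"
  by (auto simp: complex_is_Real_iff)

lemma rval_rep:
  fixes p0 q0 P Q :: "complex poly"
  assumes Qnz: "Q \<noteq> 0" and dQ: "degree Q \<le> N" and dP: "degree P \<le> N"
    and rep: "\<forall>z. poly Q z \<noteq> 0 \<longrightarrow> poly p0 z / poly q0 z = poly P z / poly Q z"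
    and x: "x \<in> ext_reals"
    and cond: "case x of Some z \<Rightarrow> poly Q z \<noteq> 0 | None \<Rightarrow> coeff Q N \<noteq> 0"
  shows "rval p0 q0 x = hat N P (cayley x) / hat N Q (cayley x)"
proof (cases x)
  case None
  have t: "((\<lambda>z. poly P z / poly Q z) \<longlongrightarrow> coeff P N / coeff Q N) at_infinity"
    using lim_inf_ratio[OF dP dQ] cond None by simp
  have "eventually (\<lambda>z. poly P z / poly Q z = poly p0 z / poly q0 z) at_infinity"
    using eventually_poly_nz_inf[OF Qnz] by eventually_elim (use rep in auto)
  with t have "((\<lambda>z. poly p0 z / poly q0 z) \<longlongrightarrow> coeff P N / coeff Q N) at_infinity"
    by (rule Lim_transform_eventually)
  then have "rval p0 q0 x = coeff P N / coeff Q N"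
    unfolding rval_def None by (simp add: tendsto_Lim[OF trivial_limit_at_infinity])
  then show ?thesis using None cond by (simp add: cayley_def hat_one)
next
  case (Some z)
  then have zr: "z \<in> \<real>" using x by (auto simp: ext_reals_def)
  have "hat N P (cayley x) / hat N Q (cayley x) = poly P z / poly Q z"
    using hat_ratio[OF dP dQ real_not_minus_i[OF zr]] Some by (simp add: cayley_def)
  also have "\<dots> = rval p0 q0 x" using rep cond Some by (simp add: rval_def)
  finally show ?thesis by simp
qed

lemma lead_rep_some:
  fixes p0 q0 P Q :: "complex poly"
  assumes Qnz: "Q \<noteq> 0" and d: "d = order c Q"
    and rep: "\<forall>z. poly Q z \<noteq> 0 \<longrightarrow> poly p0 z / poly q0 z = poly P z / poly Q z"
  shows "lead_val p0 q0 (Some c) d = (-1) ^ d * poly P c / poly (Q div [:-c,1:] ^ d) c"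
proof -
  define Q1 where "Q1 = Q div [:-c,1:] ^ d"
  have Q: "Q = [:-c,1:] ^ d * Q1" unfolding Q1_def d using order_1[of c Q] by simp
  have Q1c: "poly Q1 c \<noteq> 0"
  proof
    assume "poly Q1 c = 0"
    then have "[:-c,1:] dvd Q1" by (simp add: poly_eq_0_iff_dvd)
    then have "[:-c,1:] ^ Suc d dvd Q" unfolding Q power_Suc2 by (rule mult_dvd_mono[OF dvd_refl])
    with order[OF Qnz, of c] d show False by simp
  qed
  have t: "((\<lambda>z. (-1) ^ d * poly P z / poly Q1 z) \<longlongrightarrow> (-1) ^ d * poly P c / poly Q1 c) (at c)"
    using Q1c by (intro tendsto_intros) auto
  have "eventually (\<lambda>z. (-1) ^ d * poly P z / poly Q1 z
      = (poly p0 z / poly q0 z) / (1 / (c - z)) ^ d) (at c)"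
    using eventually_poly_nz_at[OF Qnz, of c]
  proof eventually_elim
    case (elim z)
    then have zc: "z - c \<noteq> 0" by simp
    have cz: "(c - z) ^ d = (-1) ^ d * (z - c) ^ d"
      by (metis minus_diff_eq mult_minus1 power_mult_distrib)
    have "(poly p0 z / poly q0 z) / (1 / (c - z)) ^ d = poly P z / poly Q z * (c - z) ^ d"
      using rep elim by (simp add: power_one_over)
    also have "\<dots> = (-1) ^ d * poly P z / poly Q1 z"
      unfolding Q cz using zc by (simp add: poly_power field_simps)
    finally show ?case by simp
  qed
  with t have "((\<lambda>z. (poly p0 z / poly q0 z) / (1 / (c - z)) ^ d) \<longlongrightarrow> (-1) ^ d * poly P c / poly Q1 c) (at c)"
    by (rule Lim_transform_eventually)
  then show ?thesis unfolding lead_val_def Q1_def[symmetric]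
    by (simp add: tendsto_Lim[OF at_neq_bot])
qed

lemma lead_rep_none:
  fixes p0 q0 P Q :: "complex poly"
  assumes Qnz: "Q \<noteq> 0" and dP: "degree P \<le> N" and N: "N = degree Q + d"
    and rep: "\<forall>z. poly Q z \<noteq> 0 \<longrightarrow> poly p0 z / poly q0 z = poly P z / poly Q z"
  shows "lead_val p0 q0 None d = coeff P N / lead_coeff Q"
proof -
  define R where "R = monom 1 d * Q"
  have dR: "degree R = N" unfolding R_def N using Qnz by (simp add: degree_mult_eq degree_monom_eq)
  have cR: "coeff R N = lead_coeff Q" unfolding R_def N by (simp add: coeff_monom_mult)
  have t: "((\<lambda>z. poly P z / poly R z) \<longlongrightarrow> coeff P N / lead_coeff Q) at_infinity"
    using lim_inf_ratio[OF dP, of R] dR cR Qnz by simp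
  have "eventually (\<lambda>z. poly P z / poly R z = (poly p0 z / poly q0 z) / z ^ d) at_infinity"
    using eventually_poly_nz_inf[OF Qnz] by eventually_elim (use rep in \<open>auto simp: R_def poly_monom\<close>)
  with t have "((\<lambda>z. (poly p0 z / poly q0 z) / z ^ d) \<longlongrightarrow> coeff P N / lead_coeff Q) at_infinity"
    by (rule Lim_transform_eventually)
  then show ?thesis unfolding lead_val_def
    by (simp add: tendsto_Lim[OF trivial_limit_at_infinity])
qed

lemma Q1_nz:
  fixes Q :: "complex poly"
  assumes Qnz: "Q \<noteq> 0"
  shows "poly (Q div [:-c,1:] ^ order c Q) c \<noteq> 0"
proof
  define d where "d = order c Q"
  define Q1 where "Q1 = Q div [:-c,1:] ^ d"
  have Q: "Q = [:-c,1:] ^ d * Q1" unfolding Q1_def d_def using order_1[of c Q] by simp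
  assume "poly (Q div [:-c,1:] ^ order c Q) c = 0"
  then have "[:-c,1:] dvd Q1" by (simp add: poly_eq_0_iff_dvd Q1_def d_def)
  then have "[:-c,1:] ^ Suc d dvd Q" unfolding Q power_Suc2 by (rule mult_dvd_mono[OF dvd_refl])
  with order[OF Qnz, of c] d_def show False by simp
qed

lemma hat_nz:
  fixes Q :: "complex poly"
  assumes "degree Q \<le> N" "z \<noteq> - \<i>" "poly Q z \<noteq> 0"
  shows "hat N Q ((z - \<i>) / (z + \<i>)) \<noteq> 0"
proof -
  have zi: "z + \<i> \<noteq> 0" using assms(2) by (metis add.commute add_eq_0_iff2 minus_equation_iff)
  have "1 - (z - \<i>) / (z + \<i>) \<noteq> 0" using zi by (simp add: field_simps)
  then show ?thesis using hat_eq[OF assms(1,2)] assms(3) by simp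
qed

lemma degree_cnj [simp]: "degree (map_poly cnj p) = degree p"
  by (rule degree_map_poly) auto

lemma coeff_cnj [simp]: "coeff (map_poly cnj p) k = cnj (coeff p k)"
  by (rule coeff_map_poly) auto

lemma poly_cnj_real: "z \<in> \<real> \<Longrightarrow> poly (map_poly cnj p) z = cnj (poly p z)"
  by (simp add: Reals_cnj_iff)

lemma cnj_poly_zero_iff: "map_poly cnj p = 0 \<longleftrightarrow> p = 0"
  by (metis degree_cnj coeff_cnj leading_coeff_0_iff complex_cnj_zero_iff)

lemma Rp_real:
  fixes p q :: "complex poly"
  assumes "z \<in> \<real>"
  shows "poly (p * map_poly cnj p - q * map_poly cnj q) z
       = of_real ((norm (poly p z))\<^sup>2) - of_real ((norm (poly q z))\<^sup>2)"
proof -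
  have cz: "cnj z = z" using assms by (simp add: Reals_cnj_iff)
  show ?thesis unfolding poly_diff poly_mult poly_map_poly_cnj cz complex_norm_square ..
qed

lemma Rp_nz:
  fixes p q :: "complex poly"
  assumes qnz: "q \<noteq> 0" and cop: "coprime p q" and rr: "\<And>c. poly q c = 0 \<Longrightarrow> c \<in> \<real>"
    and nc: "\<not> (degree p = 0 \<and> degree q = 0)"
  shows "p * map_poly cnj p - q * map_poly cnj q \<noteq> 0"
proof
  assume "p * map_poly cnj p - q * map_poly cnj q = 0"
  then have eq: "p * map_poly cnj p = q * map_poly cnj q" by simp
  have "q * map_poly cnj q \<noteq> 0" using qnz by (simp add: cnj_poly_zero_iff)
  then have pnz: "p \<noteq> 0" using eq by auto
  have "degree (p * map_poly cnj p) = degree (q * map_poly cnj q)" using eq by simp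
  then have "degree p + degree p = degree q + degree q"
    using pnz qnz by (simp add: degree_mult_eq cnj_poly_zero_iff)
  then have dpq: "degree p = degree q" by simp
  then have "degree q \<noteq> 0" using nc by simp
  then have "\<not> constant (poly q)" by (simp add: constant_degree)
  then obtain c where qc: "poly q c = 0" using fundamental_theorem_of_algebra by blast
  then have cr: "c \<in> \<real>" by (rule rr)
  have "poly (p * map_poly cnj p - q * map_poly cnj q) c = 0" using eq by simp
  then have "complex_of_real ((norm (poly p c))\<^sup>2) - complex_of_real ((norm (poly q c))\<^sup>2) = 0"
    unfolding Rp_real[OF cr, of p q] .
  then have "norm (poly p c) = 0" using qc by (simp del: of_real_power)
  then have "poly p c = 0" by simp
  then have "[:-c,1:] dvd p" "[:-c,1:] dvd q" using qc by (simp_all add: poly_eq_0_iff_dvd)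
  then have "is_unit [:-c,1:]" using cop by (rule coprime_common_divisor[rotated])
  then show False by (simp add: is_unit_poly_iff)
qed

theorem corollary2p8:
  fixes E :: "csphere set" and D :: "csphere \<Rightarrow> int" and n :: nat and xs :: csphere
    and p q :: "complex poly"
  assumes E_sub: "E \<subseteq> ext_reals"
    and E_compact: "compact_ext E"
    and E_proper: "E \<noteq> ext_reals"
    and E_inf: "infinite E"
    and n_pos: "n \<ge> 1"
    and D_integral: "\<forall>x. D x \<ge> 0"
    and D_fin: "finite {x. D x \<noteq> 0}"
    and D_deg: "(\<Sum>x\<in>{x. D x \<noteq> 0}. D x) = int n"
    and D_supp: "{x. D x \<noteq> 0} \<subseteq> ext_reals - E"
    and xs_in: "xs \<in> ext_reals - E"
    and F_adm: "admissible E D p q"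
    and F_max: "\<forall>p' q'. admissible E D p' q' \<longrightarrow>
                  Re (lead_val p' q' xs (nat (D xs))) \<le> Re (lead_val p q xs (nat (D xs)))"
    and F_nonconst: "\<not> is_constant_rf p q"
  shows "int (rdeg p q) \<ge> \<lceil>(real n + 1) / 2\<rceil>"
proof (rule ccontr)
  assume "\<not> ?thesis"
  then have "\<not> ((real n + 1) / 2 \<le> real (rdeg p q))" by (simp add: ceiling_le_iff)
  then have "real (2 * rdeg p q) < real (n + 1)" by simp
  then have small: "2 * rdeg p q \<le> n" by (simp only: of_nat_less_iff)
  from F_adm have qnz: "q \<noteq> 0" and cop: "coprime p q"
    and pol: "\<And>x. int (polar p q x) \<le> D x" and bnd: "\<And>x. x \<in> E \<Longrightarrow> cmod (rval p q x) \<le> 1"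
    unfolding admissible_def LL_def ratfun_def by auto
  define Sf where "Sf = {c. D (Some c) \<noteq> 0}"
  have Sf_fin: "finite Sf"
  proof -
    have "Some ` Sf \<subseteq> {x. D x \<noteq> 0}" unfolding Sf_def by auto
    then have "finite (Some ` Sf)" using D_fin finite_subset by blast
    then show ?thesis by (rule finite_imageD) auto
  qed
  define e where "e c = nat (D (Some c))" for c
  define Q where "Q = (\<Prod>c\<in>Sf. [:-c,1:] ^ e c)"
  have Qnz: "Q \<noteq> 0" unfolding Q_def by (rule prod_lin_nz)
  have ordQ: "order c Q = e c" for c
    unfolding Q_def using order_prod_lin[OF Sf_fin] by (auto simp: e_def Sf_def)
  have Qroot: "Some z \<in> ext_reals - E" if "poly Q z = 0" for z
  proof -
    have "z \<in> Sf" using that poly_prod_lin_zero[OF Sf_fin] unfolding Q_def by blast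
    then show ?thesis using D_supp unfolding Sf_def by auto
  qed
  have degQ: "degree Q + nat (D None) = n"
  proof -
    have "{x. D x \<noteq> 0} \<subseteq> insert None (Some ` Sf)"
    proof
      fix x assume "x \<in> {x. D x \<noteq> 0}"
      then show "x \<in> insert None (Some ` Sf)" by (cases x) (auto simp: Sf_def)
    qed
    then have "(\<Sum>x\<in>{x. D x \<noteq> 0}. D x) = (\<Sum>x\<in>insert None (Some ` Sf). D x)"
      using Sf_fin by (intro sum.mono_neutral_left) auto
    also have "\<dots> = D None + (\<Sum>c\<in>Sf. D (Some c))"
      using Sf_fin by (simp add: sum.reindex)
    also have "\<dots> = int (nat (D None)) + (\<Sum>c\<in>Sf. int (e c))"
      using D_integral by (simp add: e_def)
    also have "\<dots> = int (nat (D None) + degree Q)"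
      unfolding Q_def degree_prod_lin by simp
    finally have "int n = int (nat (D None) + degree Q)" using D_deg by simp
    then show ?thesis by (simp only: of_nat_eq_iff add.commute)
  qed
  have qroots: "c \<in> \<real> \<and> Some c \<notin> E" if "poly q c = 0" for c
  proof -
    have "order c q > 0" using that qnz by (simp add: order_gt_0_iff)
    then have "D (Some c) \<noteq> 0" using pol[of "Some c"] by (simp add: polar_def)
    then show ?thesis using D_supp by (auto simp: ext_reals_def)
  qed
  have ordq: "order c q \<le> order c Q" for c
    using pol[of "Some c"] D_integral by (simp add: polar_def ordQ e_def)
  have "q dvd Q" by (rule dvd_by_order[OF qnz Qnz ordq])
  then obtain W where QW: "Q = q * W" by (elim dvdE)
  have Wnz: "W \<noteq> 0" using QW Qnz by auto
  define PF where "PF = p * W"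
  have degPF: "degree PF \<le> n"
  proof (cases "p = 0")
    case False
    have "int (degree p - degree q) \<le> D None" using pol[of None] by (simp add: polar_def)
    then have "degree p \<le> degree q + nat (D None)" by linarith
    moreover have "degree Q = degree q + degree W" using QW qnz Wnz by (simp add: degree_mult_eq)
    ultimately show ?thesis using False Wnz degQ by (simp add: PF_def degree_mult_eq)
  qed (simp add: PF_def)
  have repF: "\<forall>z. poly Q z \<noteq> 0 \<longrightarrow> poly p z / poly q z = poly PF z / poly Q z"
    by (auto simp: PF_def QW)
  have condE: "case x of Some z \<Rightarrow> poly Q z \<noteq> 0 | None \<Rightarrow> coeff Q n \<noteq> 0" if "x \<in> E" for x
  proof (cases x)
    case None
    then have "D None = 0" using D_supp that by auto
    then have "degree Q = n" using degQ by simp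
    then have "coeff Q n \<noteq> 0" using Qnz by auto
    then show ?thesis using None by simp
  next
    case (Some z) then show ?thesis using Qroot that by auto
  qed
  have dQn: "degree Q \<le> n" using degQ by simp
  have xE: "x \<in> ext_reals" if "x \<in> E" for x using that E_sub by auto
  define fF where "fF w = hat n PF w / hat n Q w" for w
  have rvalF: "rval p q x = fF (cayley x)" if "x \<in> E" for x
    unfolding fF_def by (rule rval_rep[OF Qnz dQn degPF repF xE[OF that] condE[OF that]])

  define m where "m = max (degree p) (degree q)"
  have m_rdeg: "m \<le> rdeg p q"
  proof -
    define T where "T = insert None (Some ` {c. poly q c = 0})"
    have Tfin: "finite T" unfolding T_def using poly_roots_finite[OF qnz] by auto
    have sub: "{x. polar p q x \<noteq> 0} \<subseteq> T"
    proof
      fix x assume "x \<in> {x. polar p q x \<noteq> 0}"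
      then show "x \<in> T" using qnz by (cases x) (auto simp: T_def polar_def order_root)
    qed
    have "rdeg p q = (\<Sum>x\<in>T. polar p q x)"
      unfolding rdeg_def using Tfin sub by (intro sum.mono_neutral_left) auto
    also have "\<dots> = polar p q None + (\<Sum>c | poly q c = 0. polar p q (Some c))"
      unfolding T_def using poly_roots_finite[OF qnz] by (simp add: sum.reindex)
    also have "\<dots> = (degree p - degree q) + degree q"
      using degree_sum_order[OF qnz] by (simp add: polar_def)
    finally show ?thesis unfolding m_def by simp
  qed
  have m_n: "2 * m \<le> n" using m_rdeg small by simp
  define Rp where "Rp = p * map_poly cnj p - q * map_poly cnj q"
  have degRp: "degree Rp \<le> 2 * m"
  proof -
    have "degree (p * map_poly cnj p) \<le> 2 * m"
      using degree_mult_le[of p "map_poly cnj p"] unfolding m_def by simp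
    moreover have "degree (q * map_poly cnj q) \<le> 2 * m"
      using degree_mult_le[of q "map_poly cnj q"] unfolding m_def by simp
    ultimately show ?thesis unfolding Rp_def using degree_diff_le by blast
  qed
  have nc: "\<not> (degree p = 0 \<and> degree q = 0)"
  proof
    assume "degree p = 0 \<and> degree q = 0"
    then obtain a b where "p = [:a:]" "q = [:b:]" by (metis degree_eq_zeroE)
    then have "is_constant_rf p q" unfolding is_constant_rf_def by (intro exI[of _ "a / b"]) simp
    with F_nonconst show False by simp
  qed
  have Rpnz: "Rp \<noteq> 0" unfolding Rp_def
    by (rule Rp_nz[OF qnz cop _ nc]) (use qroots in blast)
  define A where "A = {z. Some z \<in> E \<and> cmod (rval p q (Some z)) = 1}"
  have A_sub: "A \<subseteq> {z. poly Rp z = 0}"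
  proof
    fix z assume "z \<in> A"
    then have zE: "Some z \<in> E" and one: "cmod (poly p z / poly q z) = 1"
      unfolding A_def by (auto simp: rval_def)
    have zr: "z \<in> \<real>" using zE E_sub by (auto simp: ext_reals_def)
    have "poly q z \<noteq> 0" using qroots zE by blast
    then have "cmod (poly p z) = cmod (poly q z)" using one by (simp add: norm_divide divide_eq_1_iff)
    then show "z \<in> {z. poly Rp z = 0}" unfolding Rp_def using Rp_real[OF zr, of p q] by simp
  qed
  have A_fin: "finite A" using A_sub poly_roots_finite[OF Rpnz] finite_subset by blast
  have cardA: "card A \<le> degree Rp"
    using card_mono[OF poly_roots_finite[OF Rpnz] A_sub] card_poly_roots_bound[OF Rpnz] by linarith
  have cardA_n: "card A \<le> n" using cardA degRp m_n by linarith
  have cardA_inf: "card A < n" if NE: "None \<in> E" and one: "cmod (rval p q None) = 1"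
  proof -
    have "D None = 0" using D_supp NE by auto
    then have "degree p \<le> degree q" using pol[of None] by (simp add: polar_def)
    then have mq: "m = degree q" unfolding m_def by simp
    have "rval p q None = coeff p m / coeff q m"
      unfolding rval_def using lim_inf_ratio[of p m q] \<open>degree p \<le> degree q\<close> mq qnz
      by (simp add: tendsto_Lim[OF trivial_limit_at_infinity])
    then have eqn: "cmod (coeff p m) = cmod (coeff q m)"
      using one qnz mq by (simp add: norm_divide divide_eq_1_iff)
    moreover have "cmod (coeff q m) \<noteq> 0" using qnz mq by simp
    ultimately have "coeff p m \<noteq> 0" by auto
    then have dp: "degree p = m" using \<open>degree p \<le> degree q\<close> mq le_degree by fastforce
    have c1: "coeff (p * map_poly cnj p) (2 * m) = coeff p m * cnj (coeff p m)"
      using coeff_mult_degree_sum[of p "map_poly cnj p"] dp by (simp add: mult_2)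
    have c2: "coeff (q * map_poly cnj q) (2 * m) = coeff q m * cnj (coeff q m)"
      using coeff_mult_degree_sum[of q "map_poly cnj q"] mq by (simp add: mult_2)
    have "coeff Rp (2 * m) = 0"
      unfolding Rp_def coeff_diff c1 c2 complex_norm_square[symmetric] eqn by simp
    then have "degree Rp \<noteq> 2 * m" using Rpnz by (metis leading_coeff_0_iff)
    then show ?thesis using cardA degRp m_n by linarith
  qed

  define PK where "PK = (\<Prod>a\<in>A. [:-a,1:] ^ (1::nat)) * (if xs = None then monom 1 (n - card A) else 1)"
  have degprod: "degree (\<Prod>a\<in>A. [:-a,1::complex:] ^ (1::nat)) = card A"
    using degree_prod_lin[of "\<lambda>_. 1" A] by simp
  have prodnz: "(\<Prod>a\<in>A. [:-a,1::complex:] ^ (1::nat)) \<noteq> 0" by (rule prod_lin_nz)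
  have degPK: "degree PK \<le> n"
    using degprod prodnz cardA_n by (auto simp: PK_def degree_mult_eq degree_monom_eq)
  have PK_A: "poly PK a = 0" if "a \<in> A" for a
    using that A_fin poly_prod_lin_zero[OF A_fin, of "\<lambda>_. 1" a] by (simp add: PK_def)
  have PK_none: "coeff PK n = 1" if "xs = None"
  proof -
    have "lead_coeff (\<Prod>a\<in>A. [:-a,1::complex:] ^ (1::nat)) = 1" by (simp add: lead_coeff_prod)
    moreover have dPK: "degree PK = n" using that degprod prodnz cardA_n
      by (simp add: PK_def degree_mult_eq degree_monom_eq)
    have PKeq: "PK = (\<Prod>a\<in>A. [:-a,1::complex:] ^ (1::nat)) * monom 1 (n - card A)"
      using that by (simp add: PK_def)
    have "lead_coeff PK = lead_coeff (\<Prod>a\<in>A. [:-a,1::complex:] ^ (1::nat)) * lead_coeff (monom (1::complex) (n - card A))"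
      unfolding PKeq by (rule lead_coeff_mult)
    with calculation have "lead_coeff PK = 1" by (simp add: lead_coeff_monom degree_monom_eq)
    then show ?thesis using dPK by simp
  qed
  have PK_some: "poly PK c \<noteq> 0" if "xs = Some c" for c
  proof -
    have "c \<notin> A" using that xs_in unfolding A_def by auto
    then show ?thesis using that poly_prod_lin_zero[OF A_fin, of "\<lambda>_. 1" c] by (simp add: PK_def)
  qed
  have PK_inf: "coeff PK n = 0" if "None \<in> E" "cmod (rval p q None) = 1"
  proof -
    have xn: "xs \<noteq> None"
    proof
      assume "xs = None" with that(1) xs_in show False by simp
    qed
    then have "degree PK = card A" using degprod unfolding PK_def if_not_P[OF xn] by simp
    then show ?thesis using cardA_inf[OF that] by (simp add: coeff_eq_0)
  qed
  define fK where "fK w = hat n PK w / hat n Q w" for w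
  have key: "fK (cayley x) = 0" if xE: "x \<in> E" and one: "cmod (fF (cayley x)) = 1" for x
  proof (cases x)
    case None
    then have "coeff PK n = 0" using PK_inf xE one rvalF[OF xE] by simp
    then show ?thesis using None by (simp add: fK_def cayley_def hat_one)
  next
    case (Some z)
    then have "z \<in> A" using xE one rvalF[OF xE] unfolding A_def by simp
    then have "poly PK z = 0" by (rule PK_A)
    moreover have "z \<in> \<real>" using xE Some E_sub by (auto simp: ext_reals_def)
    ultimately show ?thesis
      using hat_ratio[OF degPK dQn real_not_minus_i] Some by (simp add: fK_def cayley_def)
  qed
  define ell where "ell P = (case xs of Some c \<Rightarrow> (-1) ^ (nat (D xs)) * poly P c / poly (Q div [:-c,1:] ^ (nat (D xs))) c
      | None \<Rightarrow> coeff P n / lead_coeff Q)" for P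
  have leadrep: "lead_val p0 q0 xs (nat (D xs)) = ell P"
    if rep: "\<forall>z. poly Q z \<noteq> 0 \<longrightarrow> poly p0 z / poly q0 z = poly P z / poly Q z" and dP: "degree P \<le> n"
    for p0 q0 P
  proof (cases xs)
    case None
    have "n = degree Q + nat (D None)" using degQ by simp
    from lead_rep_none[OF Qnz dP this rep] show ?thesis using None by (simp add: ell_def)
  next
    case (Some c)
    have "nat (D (Some c)) = order c Q" by (simp add: ordQ e_def)
    from lead_rep_some[OF Qnz this rep] show ?thesis using Some by (simp add: ell_def)
  qed
  have ell_lin: "ell (smult a P + smult b R) = a * ell P + b * ell R" for a b P R
    by (cases xs) (simp_all add: ell_def add_divide_distrib algebra_simps)
  have ellK: "ell PK \<noteq> 0"
  proof (cases xs)
    case None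
    then show ?thesis using PK_none Qnz by (simp add: ell_def)
  next
    case (Some c)
    have "nat (D (Some c)) = order c Q" by (simp add: ordQ e_def)
    then show ?thesis using Some PK_some[OF Some] Q1_nz[OF Qnz, of c] by (simp add: ell_def)
  qed

  define C where "C = cayley ` E"
  have Ccomp: "compact C" using E_compact unfolding C_def compact_ext_def .
  have Cne: "C \<noteq> {}" using E_inf unfolding C_def by auto
  have hatQnz: "hat n Q w \<noteq> 0" if "w \<in> C" for w
  proof -
    from that obtain x where xE: "x \<in> E" and w: "w = cayley x" unfolding C_def by blast
    show ?thesis
    proof (cases x)
      case None
      then show ?thesis using condE[OF xE] w by (simp add: cayley_def hat_one)
    next
      case (Some z)
      then have "z \<in> \<real>" using xE E_sub by (auto simp: ext_reals_def)
      then show ?thesis using hat_nz[OF dQn real_not_minus_i] condE[OF xE] Some w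
        by (simp add: cayley_def)
    qed
  qed
  have contF: "continuous_on C fF" unfolding fF_def
    by (intro continuous_on_divide continuous_hat) (use hatQnz in auto)
  have contK: "continuous_on C fK" unfolding fK_def
    by (intro continuous_on_divide continuous_hat) (use hatQnz in auto)
  have fF_le: "cmod (fF w) \<le> 1" if "w \<in> C" for w
    using that bnd rvalF unfolding C_def by auto
  have keyC: "fK w = 0" if "w \<in> C" "cmod (fF w) = 1" for w
    using that key unfolding C_def by auto
  define t where "t = (1 + cmod (ell PF)) / ell PK"
  define \<psi> where "\<psi> w = (1 - cmod (fF w)) + max 0 (cmod (fF w) - cmod t * cmod (fK w))" for w
  have contpsi: "continuous_on C \<psi>" unfolding \<psi>_def
    by (intro continuous_intros contF contK)
  obtain w0 where w0: "w0 \<in> C" "\<And>y. y \<in> C \<Longrightarrow> \<psi> w0 \<le> \<psi> y"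
    using continuous_attains_inf[OF Ccomp Cne contpsi] by auto
  define \<delta> where "\<delta> = \<psi> w0"
  have \<delta>pos: "\<delta> > 0"
  proof (rule ccontr)
    assume "\<not> \<delta> > 0"
    then have "1 - cmod (fF w0) = 0" "cmod (fF w0) - cmod t * cmod (fK w0) \<le> 0"
      using fF_le[OF w0(1)] unfolding \<delta>_def \<psi>_def by auto
    moreover then have "fK w0 = 0" using keyC[OF w0(1)] by simp
    ultimately show False by simp
  qed
  obtain w1 where w1: "w1 \<in> C" "\<And>y. y \<in> C \<Longrightarrow> cmod (fK y) \<le> cmod (fK w1)"
    using continuous_attains_sup[OF Ccomp Cne continuous_on_norm[OF contK]] by auto
  define M where "M = cmod (fK w1)"
  have M0: "M \<ge> 0" unfolding M_def by simp
  define \<epsilon> where "\<epsilon> = min (1/2) (\<delta> / (cmod t * M + 1))"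
  have \<epsilon>pos: "\<epsilon> > 0" unfolding \<epsilon>_def using \<delta>pos M0 by (simp add: add_nonneg_pos)
  have \<epsilon>le: "\<epsilon> \<le> 1/2" unfolding \<epsilon>_def by (rule min.cobounded1)
  have \<epsilon>M: "\<epsilon> * (cmod t * M) \<le> \<delta>"
  proof -
    have tM: "cmod t * M \<ge> 0" using M0 by simp
    have "\<epsilon> \<le> \<delta> / (cmod t * M + 1)" unfolding \<epsilon>_def by (rule min.cobounded2)
    then have "\<epsilon> * (cmod t * M + 1) \<le> \<delta>" using tM by (simp add: pos_le_divide_eq)
    then show ?thesis using \<epsilon>pos by (simp add: algebra_simps)
  qed
  have bound: "cmod (complex_of_real (1 - \<epsilon>) * fF w + complex_of_real \<epsilon> * t * fK w) \<le> 1" if wC: "w \<in> C" for w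
  proof -
    define a where "a = cmod (fF w)"
    define k where "k = cmod t * cmod (fK w)"
    have a1: "a \<le> 1" using fF_le[OF wC] unfolding a_def .
    have k0: "k \<ge> 0" unfolding k_def by simp
    have "cmod (complex_of_real (1 - \<epsilon>) * fF w + complex_of_real \<epsilon> * t * fK w)
        \<le> cmod (complex_of_real (1 - \<epsilon>) * fF w) + cmod (complex_of_real \<epsilon> * t * fK w)"
      by (rule norm_triangle_ineq)
    also have "\<dots> = (1 - \<epsilon>) * a + \<epsilon> * k"
      using \<epsilon>pos \<epsilon>le unfolding a_def k_def norm_mult norm_of_real by simp
    also have "\<dots> \<le> 1"
    proof (cases "k \<le> a")
      case True
      then have "\<epsilon> * k \<le> \<epsilon> * a" using \<epsilon>pos by (simp add: mult_left_mono)
      then show ?thesis using a1 by (simp add: algebra_simps)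
    next
      case False
      then have "\<psi> w = 1 - a" unfolding \<psi>_def a_def k_def by simp
      then have "\<delta> \<le> 1 - a" using w0(2)[OF wC] unfolding \<delta>_def by simp
      moreover have "k \<le> cmod t * M" unfolding k_def M_def using w1(2)[OF wC] by (simp add: mult_left_mono)
      then have "\<epsilon> * k \<le> \<epsilon> * (cmod t * M)" using \<epsilon>pos by (simp add: mult_left_mono)
      moreover have "(1 - \<epsilon>) * a \<le> a" using \<epsilon>pos a_def by (simp add: algebra_simps)
      ultimately show ?thesis using \<epsilon>M by linarith
    qed
    finally show ?thesis .
  qed

  define PG where "PG = smult (complex_of_real (1 - \<epsilon>)) PF + smult (complex_of_real \<epsilon> * t) PK"
  have degPG: "degree PG \<le> n"
    unfolding PG_def using degPF degPK degree_add_le degree_smult_le order.trans by metis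
  define g where "g = gcd PG Q"
  define p' where "p' = PG div g"
  define q' where "q' = Q div g"
  have gnz: "g \<noteq> 0" unfolding g_def using Qnz by simp
  have PGeq: "PG = p' * g" unfolding p'_def g_def by simp
  have Qeq: "Q = q' * g" unfolding q'_def g_def by simp
  have q'nz: "q' \<noteq> 0" using Qeq Qnz by auto
  have cop': "coprime p' q'" unfolding p'_def q'_def g_def by (rule div_gcd_coprime) (use Qnz in simp)
  have q'dvd: "q' dvd Q" using Qeq by simp
  have pol': "int (polar p' q' x) \<le> D x" for x
  proof (cases x)
    case (Some c)
    have "order c q' \<le> order c Q" by (rule dvd_imp_order_le[OF Qnz q'dvd])
    then have "order c q' \<le> nat (D (Some c))" by (simp add: ordQ e_def)
    moreover have "D (Some c) \<ge> 0" using D_integral by simp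
    ultimately have "int (order c q') \<le> D (Some c)" by linarith
    then show ?thesis using Some by (simp add: polar_def)
  next
    case None
    have "degree p' \<le> degree q' + nat (D None)"
    proof (cases "p' = 0")
      case False
      have "degree PG = degree p' + degree g" using PGeq False gnz by (simp add: degree_mult_eq)
      moreover have "degree Q = degree q' + degree g" using Qeq q'nz gnz by (simp add: degree_mult_eq)
      ultimately show ?thesis using degPG degQ by linarith
    qed simp
    moreover have "D None \<ge> 0" using D_integral by simp
    ultimately have "int (degree p' - degree q') \<le> D None" by linarith
    then show ?thesis using None by (simp add: polar_def)
  qed
  have repG: "\<forall>z. poly Q z \<noteq> 0 \<longrightarrow> poly p' z / poly q' z = poly PG z / poly Q z"
    by (auto simp: PGeq Qeq)
  have rvalG: "rval p' q' x = complex_of_real (1 - \<epsilon>) * fF (cayley x) + complex_of_real \<epsilon> * t * fK (cayley x)"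
    if hx: "x \<in> E" for x
  proof -
    have "rval p' q' x = hat n PG (cayley x) / hat n Q (cayley x)"
      by (rule rval_rep[OF Qnz dQn degPG repG xE[OF hx] condE[OF hx]])
    also have "\<dots> = complex_of_real (1 - \<epsilon>) * fF (cayley x) + complex_of_real \<epsilon> * t * fK (cayley x)"
      unfolding PG_def hat_lin fF_def fK_def by (simp add: add_divide_distrib)
    finally show ?thesis .
  qed
  have admG: "admissible E D p' q'"
    unfolding admissible_def LL_def ratfun_def
  proof (intro conjI ballI)
    show "(p', q') \<in> {(p, q). (q \<noteq> 0 \<and> coprime p q) \<and> (\<forall>x. int (polar p q x) \<le> D x)}"
      using q'nz cop' pol' by simp
  next
    fix x assume xE: "x \<in> E"
    have "cayley x \<in> C" unfolding C_def using xE by simp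
    then show "cmod (rval p' q' x) \<le> 1" using bound rvalG[OF xE] by simp
  qed
  have "Re (lead_val p' q' xs (nat (D xs))) \<le> Re (lead_val p q xs (nat (D xs)))"
    using F_max admG by blast
  moreover have "lead_val p' q' xs (nat (D xs)) = ell PG" by (rule leadrep[OF repG degPG])
  moreover have "lead_val p q xs (nat (D xs)) = ell PF" by (rule leadrep[OF repF degPF])
  moreover have "ell PG = complex_of_real (1 - \<epsilon>) * ell PF + complex_of_real \<epsilon> * (1 + cmod (ell PF))"
    unfolding PG_def ell_lin t_def using ellK by simp
  ultimately have "(1 - \<epsilon>) * Re (ell PF) + \<epsilon> * (1 + cmod (ell PF)) \<le> Re (ell PF)" by simp
  then have "\<epsilon> * (1 + cmod (ell PF) - Re (ell PF)) \<le> 0" by (simp add: algebra_simps)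
  moreover have "1 + cmod (ell PF) - Re (ell PF) > 0" using complex_Re_le_cmod[of "ell PF"] by linarith
  ultimately show False using \<epsilon>pos by (simp add: mult_le_0_iff)
qed

end
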